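(* Let $W=(w_{ij})\in (\mathbb{R}_{>0})^{n\times m}$, $T=T(W)=(t_{ij})$ and $s\in\mathbb{C}$. Then $$\sum_{i=1}^p \frac{s}{w_{i,p-i+1}} + \sum {}^{'} \frac{1}{w_{ij}} = \mathcal{E}_s(T),$$ where $p=n\wedge m$ and $\sum^{'}$ denotes the sum over $1\le i\le n,\ 1\le j\le m$ such that $j\ne p-i+1$.
   Context: The geometric RSK map $T$ on $(\mathbb{R}_{>0})^{n\times m}$ is defined through local moves. For $2\le i\le n$, $2\le j\le m$, the map $l_{ij}$ replaces the submatrix $\begin{pmatrix} x_{i-1,j-1}& x_{i-1,j}\\ x_{i,j-1}& x_{ij}\end{pmatrix}=\begin{pmatrix} a& b\\ c& d\end{pmatrix}$ by $\begin{pmatrix} bc/(ab+ac) & b\\ c& d(b+c) \end{pmatrix}$, leaving the other entries unchanged. For $2\le i\le n$, $l_{i1}$ replaces $x_{i1}$ by $x_{i-1,1}x_{i1}$; for $2\le j\le m$, $l_{1j}$ replaces $x_{1j}$ by $x_{1,j-1}x_{1j}$; $l_{11}$ is the identity. Set $\pi^j_i=l_{ij}\circ\cdots\circ l_{i1}$, $R_i=\pi_1^{m-i+1}\circ\cdots\circ\pi^m_i$ if $i\le m$ and $R_i=\pi^1_{i-m+1}\circ\cdots\circ\pi^m_i$ if $i\ge m$, and $T=R_n\circ\cdots\circ R_1$. For $X=(x_{ij})\in(\mathbb{R}_{>0})^{n\times m}$ and $s\in\mathbb{C}$, $\mathcal{E}_s(X)=\frac{s}{x_{11}}+\sum_{i,j}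 \frac{x_{i-1,j}+x_{i,j-1}}{x_{ij}}$, the sum over $1\le i\le n$, $1\le j\le m$, with the convention $x_{ij}=0$ if $i=0$ or $j=0$. *)

theory Defs
  imports Complex_Main
begin

text \<open>Matrices in (R_{>0})^{n x m} are represented as functions nat => nat => real,
  with the relevant entries at indices 1..n, 1..m.\<close>

type_synonym mat = "nat \<Rightarrow> nat \<Rightarrow> real"

definition mupd :: "mat \<Rightarrow> nat \<Rightarrow> nat \<Rightarrow> real \<Rightarrow> mat" where
  "mupd X i j v = (\<lambda>a b. if a = i \<and> b = j then v else X a b)"

definition lmove :: "nat \<Rightarrow> nat \<Rightarrow> mat \<Rightarrow> mat" where
  "lmove i j X =
    (if i = 1 \<and> j = 1 then X
     else if j = 1 then mupd X i 1 (X (i-1) 1 * X i 1)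
     else if i = 1 then mupd X 1 j (X 1 (j-1) * X 1 j)
     else (let a = X (i-1) (j-1); b = X (i-1) j; c = X i (j-1); d = X i j
           in mupd (mupd X (i-1) (j-1) (b * c / (a * b + a * c))) i j (d * (b + c))))"

fun rsk_pi :: "nat \<Rightarrow> nat \<Rightarrow> mat \<Rightarrow> mat" where
  "rsk_pi i 0 = id"
| "rsk_pi i (Suc j) = lmove i (Suc j) \<circ> rsk_pi i j"

text \<open>R_i = pi_{lo}^{m-i+lo} o ... o pi_i^m, with lo = max 1 (i-m+1);
  the rightmost factor pi_i^m is applied first.\<close>
definition rsk_R :: "nat \<Rightarrow> nat \<Rightarrow> mat \<Rightarrow> mat" where
  "rsk_R m i = fold (\<lambda>k. rsk_pi k (m + k - i)) (rev [max 1 (i + 1 - m)..<i + 1])"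

definition rsk_T :: "nat \<Rightarrow> nat \<Rightarrow> mat \<Rightarrow> mat" where
  "rsk_T n m = fold (rsk_R m) [1..<n + 1]"

definition energy :: "nat \<Rightarrow> nat \<Rightarrow> complex \<Rightarrow> mat \<Rightarrow> complex" where
  "energy n m s X =
    (let x = (\<lambda>i j. if i = 0 \<or> j = 0 then 0 else X i j) in
     s / complex_of_real (X 1 1) +
     (\<Sum>i\<in>{1..n}. \<Sum>j\<in>{1..m}.
        complex_of_real ((x (i-1) j + x i (j-1)) / X i j)))"

end

theory Submission
  imports Defs
begin

lemma lmove_other: "q \<noteq> j \<Longrightarrow> q \<noteq> j - 1 \<Longrightarrow> lmove i j X p q = X p q"
  by (auto simp: lmove_def mupd_def Let_def)

lemma lmove_local:
  assumes "\<And>p q. q = j - 1 \<or> q = j \<Longrightarrow> X p q = Y p q" and "q = j - 1 \<or> q = j"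
  shows "lmove i j X p q = lmove i j Y p q"
  using assms by (auto simp: lmove_def mupd_def Let_def)

lemma lmove_comm:
  assumes "j + 2 \<le> b"
  shows "lmove a b (lmove i j X) = lmove i j (lmove a b X)"
proof (intro ext)
  fix p q
  show "lmove a b (lmove i j X) p q = lmove i j (lmove a b X) p q"
  proof (cases "q = b - 1 \<or> q = b")
    case True
    have "lmove a b (lmove i j X) p q = lmove a b X p q"
      by (rule lmove_local[OF _ True]) (use assms in \<open>auto intro!: lmove_other\<close>)
    also have "\<dots> = lmove i j (lmove a b X) p q"
      using True assms by (intro lmove_other[symmetric]) auto
    finally show ?thesis .
  next
    case False
    have "lmove a b (lmove i j X) p q = lmove i j X p q"
      using False by (intro lmove_other) auto
    also have "\<dots> = lmove i j (lmove a b X) p q"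
    proof (cases "q = j - 1 \<or> q = j")
      case True
      show ?thesis
        by (rule lmove_local[OF _ True]) (use assms in \<open>auto intro!: lmove_other[symmetric]\<close>)
    next
      case F2: False
      then show ?thesis using False by (simp add: lmove_other)
    qed
    finally show ?thesis .
  qed
qed

lemma lmove_pi_comm:
  "J + 2 \<le> b \<Longrightarrow> lmove a b \<circ> rsk_pi k J = rsk_pi k J \<circ> lmove a b"
proof (induction J)
  case 0 then show ?case by simp
next
  case (Suc J)
  have "lmove a b \<circ> rsk_pi k (Suc J) = (lmove a b \<circ> lmove k (Suc J)) \<circ> rsk_pi k J" by (simp add: comp_assoc)
  also have "lmove a b \<circ> lmove k (Suc J) = lmove k (Suc J) \<circ> lmove a b"
  proof -
    have "\<And>X. lmove a b (lmove k (Suc J) X) = lmove k (Suc J) (lmove a b X)"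
      using Suc.prems by (intro lmove_comm) simp
    then show ?thesis by (simp add: fun_eq_iff)
  qed
  also have "(lmove k (Suc J) \<circ> lmove a b) \<circ> rsk_pi k J = lmove k (Suc J) \<circ> (lmove a b \<circ> rsk_pi k J)"
    by (simp add: comp_assoc)
  also have "lmove a b \<circ> rsk_pi k J = rsk_pi k J \<circ> lmove a b" using Suc by (simp add: comp_def)
  finally show ?case by (simp add: comp_assoc)
qed

fun Fr :: "nat \<Rightarrow> nat \<Rightarrow> mat \<Rightarrow> mat" where
  "Fr 0 c = id"
| "Fr (Suc i) c = Fr i (c - 1) \<circ> rsk_pi (Suc i) c"

fun Ch :: "nat \<Rightarrow> nat \<Rightarrow> mat \<Rightarrow> mat" where
  "Ch 0 c = id"
| "Ch (Suc i) 0 = id"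
| "Ch (Suc i) (Suc c) = Ch i c \<circ> lmove (Suc i) (Suc c)"

fun CR :: "nat \<Rightarrow> nat \<Rightarrow> mat \<Rightarrow> mat" where
  "CR i 0 = id"
| "CR i (Suc c) = Ch i (Suc c) \<circ> CR i c"

lemma Ch_0 [simp]: "Ch i 0 = id" by (cases i) auto

lemma Fr_0 [simp]: "Fr i 0 = id" by (induction i) auto

lemma lmove_Fr_comm: "c + 2 \<le> b \<Longrightarrow> lmove a b \<circ> Fr i c = Fr i c \<circ> lmove a b"
proof (induction i arbitrary: c)
  case 0 then show ?case by simp
next
  case (Suc i)
  have "lmove a b \<circ> Fr (Suc i) c = (lmove a b \<circ> Fr i (c - 1)) \<circ> rsk_pi (Suc i) c"
    by (simp add: comp_assoc)
  also have "lmove a b \<circ> Fr i (c - 1) = Fr i (c - 1) \<circ> lmove a b" using Suc.IH[of "c - 1"] Suc.prems by (simp add: comp_def)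
  also have "(Fr i (c - 1) \<circ> lmove a b) \<circ> rsk_pi (Suc i) c = Fr i (c - 1) \<circ> (lmove a b \<circ> rsk_pi (Suc i) c)"
    by (simp add: comp_assoc)
  also have "lmove a b \<circ> rsk_pi (Suc i) c = rsk_pi (Suc i) c \<circ> lmove a b"
    using Suc.prems by (rule lmove_pi_comm)
  finally show ?case by (simp add: comp_assoc)
qed

lemma Fr_Suc: "Fr i (Suc c) = Ch i (Suc c) \<circ> Fr i c"
proof (induction i arbitrary: c)
  case 0 then show ?case by simp
next
  case (Suc i)
  show ?case
  proof (cases c)
    case 0
    then show ?thesis by simp
  next
    case (Suc c')
    have "Fr (Suc i) (Suc c) = Fr i c \<circ> (lmove (Suc i) (Suc c) \<circ> rsk_pi (Suc i) c)"
      by simp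
    also have "Fr i c = Ch i c \<circ> Fr i c'" using Suc.IH[of c'] Suc by (simp add: comp_def)
    also have "(Ch i c \<circ> Fr i c') \<circ> (lmove (Suc i) (Suc c) \<circ> rsk_pi (Suc i) c)
       = Ch i c \<circ> (Fr i c' \<circ> lmove (Suc i) (Suc c)) \<circ> rsk_pi (Suc i) c" by (simp add: comp_assoc)
    also have "Fr i c' \<circ> lmove (Suc i) (Suc c) = lmove (Suc i) (Suc c) \<circ> Fr i c'"
      using Suc by (intro lmove_Fr_comm[symmetric]) simp
    finally show ?thesis using Suc by (simp add: comp_assoc)
  qed
qed

lemma Fr_CR: "Fr i c = CR i c"
  by (induction c) (auto simp: Fr_Suc)

lemma fold_pi_Fr: "fold (\<lambda>k. rsk_pi k (c + k - i)) (rev [1..<i + 1]) = Fr i c"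
proof (induction i arbitrary: c)
  case 0 then show ?case by simp
next
  case (Suc i)
  have "rev [1..<Suc i + 1] = Suc i # rev [1..<i + 1]" by simp
  then have "fold (\<lambda>k. rsk_pi k (c + k - Suc i)) (rev [1..<Suc i + 1])
     = fold (\<lambda>k. rsk_pi k (c + k - Suc i)) (rev [1..<i + 1]) \<circ> rsk_pi (Suc i) c"
    by simp
  also have "fold (\<lambda>k. rsk_pi k (c + k - Suc i)) (rev [1..<i + 1])
        = fold (\<lambda>k. rsk_pi k ((c - 1) + k - i)) (rev [1..<i + 1])"
    apply (rule ext, rule fold_cong)
      apply auto
    apply (rule arg_cong[where f="rsk_pi _"])
    by arith
  finally show ?case using Suc by simp
qed

lemma rsk_R_Fr: "rsk_R m i = Fr i m"
proof -
  let ?f = "\<lambda>k. rsk_pi k (m + k - i)"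
  let ?lo = "max 1 (i + 1 - m)"
  have split: "rev [1..<i + 1] = rev [?lo..<i + 1] @ rev [1..<?lo]"
  proof -
    have "[1..<i + 1] = [1..<?lo] @ [?lo..<i + 1]"
      using upt_add_eq_append[of 1 ?lo "i + 1 - ?lo"] by auto
    then show ?thesis by simp
  qed
  have "fold ?f (rev [1..<?lo]) = id"
    by (rule fold_id) auto
  then have "Fr i m = fold ?f (rev [?lo..<i + 1])"
    using fold_pi_Fr[of m i] split by simp
  then show ?thesis by (simp add: rsk_R_def)
qed

definition xb :: "mat \<Rightarrow> nat \<Rightarrow> nat \<Rightarrow> real" where
  "xb X i j = (if j = 0 then 0 else if i = 0 then (if j = 1 then 1 else 0) else X i j)"

definition Ec :: "mat \<Rightarrow> nat \<Rightarrow> nat \<Rightarrow> real" where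
  "Ec X i j = (xb X (i - 1) j + xb X i (j - 1)) / X i j"

definition Dm :: "nat \<Rightarrow> nat \<Rightarrow> mat \<Rightarrow> mat" where
  "Dm i j X = mupd X i j ((xb X (i - 1) j + xb X i (j - 1)) * X i j)"

definition tm :: "(nat \<Rightarrow> nat \<Rightarrow> bool) \<Rightarrow> mat \<Rightarrow> nat \<Rightarrow> nat \<Rightarrow> real" where
  "tm Q X i j = (if Q i j then Ec X i j else 1 / X i j)"

definition PotQ :: "nat \<Rightarrow> nat \<Rightarrow> (nat \<Rightarrow> nat \<Rightarrow> bool) \<Rightarrow> mat \<Rightarrow> real" where
  "PotQ n m Q X = (\<Sum>p\<in>{1..n}\<times>{1..m}. tm Q X (fst p) (snd p))"

definition pos :: "nat \<Rightarrow> nat \<Rightarrow> mat \<Rightarrow> bool" where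
  "pos n m X = (\<forall>i j. 1 \<le> i \<longrightarrow> i \<le> n \<longrightarrow> 1 \<le> j \<longrightarrow> j \<le> m \<longrightarrow> X i j > 0)"

lemma mupd_same: "mupd X i j (X i j) = X"
  by (auto simp: mupd_def fun_eq_iff)

lemma lmove_Dm: "1 \<le> i \<Longrightarrow> 1 \<le> j \<Longrightarrow> (i = 1 \<or> j = 1) \<Longrightarrow> lmove i j X = Dm i j X"
  by (auto simp: lmove_def Dm_def xb_def mupd_same)

lemma pos_lmove:
  assumes "pos n m X" "1 \<le> i" "i \<le> n" "1 \<le> j" "j \<le> m"
  shows "pos n m (lmove i j X)"
proof -
  have P: "\<And>a b. 1 \<le> a \<Longrightarrow> a \<le> n \<Longrightarrow> 1 \<le> b \<Longrightarrow> b \<le> m \<Longrightarrow> X a b > 0"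
    using assms(1) by (auto simp: pos_def)
  show ?thesis
    unfolding pos_def
  proof (intro allI impI)
    fix a b assume ab: "1 \<le> a" "a \<le> n" "1 \<le> b" "b \<le> m"
    show "lmove i j X a b > 0"
    proof (cases "i = 1 \<and> j = 1")
      case True then show ?thesis using P ab by (simp add: lmove_def)
    next
      case F1: False
      show ?thesis
      proof (cases "j = 1")
        case True
        then have "i \<ge> 2" using F1 assms by auto
        then show ?thesis using P ab True assms by (auto simp: lmove_def mupd_def intro!: mult_pos_pos)
      next
        case F2: False
        show ?thesis
        proof (cases "i = 1")
          case True
          then have "j \<ge> 2" using F2 assms by auto
          then show ?thesis using P ab True F2 assms by (auto simp: lmove_def mupd_def intro!: mult_pos_pos)
        next
          case F3: False
          then have ij: "i \<ge> 2" "j \<ge> 2" using F2 assms by auto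
          have pa: "X (i-1) (j-1) > 0" "X (i-1) j > 0" "X i (j-1) > 0" "X i j > 0"
            using P ij assms by auto
          have "lmove i j X = mupd (mupd X (i-1) (j-1)
              (X (i-1) j * X i (j-1) / (X (i-1) (j-1) * X (i-1) j + X (i-1) (j-1) * X i (j-1))))
              i j (X i j * (X (i-1) j + X i (j-1)))"
            using F2 F3 by (simp add: lmove_def Let_def)
          then show ?thesis using pa P ab
            by (auto simp: mupd_def intro!: mult_pos_pos divide_pos_pos add_pos_pos)
        qed
      qed
    qed
  qed
qed

lemma pos_Ch: "pos n m X \<Longrightarrow> i \<le> n \<Longrightarrow> j \<le> m \<Longrightarrow> pos n m (Ch i j X)"
proof (induction i arbitrary: j X)
  case 0 then show ?case by simp
next
  case (Suc i)
  show ?case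
  proof (cases j)
    case 0 then show ?thesis using Suc by simp
  next
    case (Suc c)
    then show ?thesis using Suc.IH[of "lmove (Suc i) (Suc c) X" c] pos_lmove[of n m X "Suc i" "Suc c"] Suc.prems
      by simp
  qed
qed

lemma pos_CR: "pos n m X \<Longrightarrow> i \<le> n \<Longrightarrow> j \<le> m \<Longrightarrow> pos n m (CR i j X)"
  by (induction j arbitrary: X) (auto intro: pos_Ch)

lemma tm_agree:
  assumes "\<And>p q. (p, q) \<noteq> (r, s) \<Longrightarrow> Z1 p q = Z2 p q"
    and "(p, q) \<noteq> (r, s)" "(p, q) \<noteq> (r, Suc s)" "(p, q) \<noteq> (Suc r, s)"
  shows "tm Q Z1 p q = tm Q Z2 p q"
proof -
  have e1: "Z1 p q = Z2 p q" using assms by auto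
  have e2: "xb Z1 (p - 1) q = xb Z2 (p - 1) q"
  proof (cases "p = 0")
    case True then show ?thesis by (simp add: xb_def assms)
  next
    case False
    then have "(p - 1, q) \<noteq> (r, s)" using assms(4) by auto
    then show ?thesis using assms(1) by (simp add: xb_def)
  qed
  have e3: "xb Z1 p (q - 1) = xb Z2 p (q - 1)"
  proof (cases "q = 0")
    case True then show ?thesis by (simp add: xb_def)
  next
    case False
    then have "(p, q - 1) \<noteq> (r, s)" using assms(3) by auto
    then show ?thesis using assms(1) by (simp add: xb_def)
  qed
  show ?thesis unfolding tm_def Ec_def using e1 e2 e3 by simp
qed

lemma sum_diff_on:
  fixes f g :: "'a \<Rightarrow> real"
  assumes "finite G" "A \<subseteq> G" "\<And>x. x \<in> G - A \<Longrightarrow> f x = g x"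
  shows "sum f G - sum g G = sum f A - sum g A"
proof -
  have "sum f G = sum f (G - A) + sum f A" "sum g G = sum g (G - A) + sum g A"
    using assms by (auto simp: sum.subset_diff)
  moreover have "sum f (G - A) = sum g (G - A)" using assms by (intro sum.cong) auto
  ultimately show ?thesis by simp
qed

lemma key_alg:
  fixes a b c k u l a' :: real
  assumes "a > 0" "b > 0" "c > 0" "k > 0"
    and a'_def: "a' = b * c / (a * b + a * c)"
  shows "k / (k * a') + (u + k * a') / b + (k * a' + l) / c = k / a + (u + a) / b + (a + l) / c"
proof -
  have s: "a * b + a * c > 0" using assms by (simp add: add_pos_pos)
  have ap: "a' > 0" unfolding a'_def using assms s by simp
  have e: "a' = b * c / (a * (b + c))" unfolding a'_def by (simp add: algebra_simps)
  have bc: "b + c > 0" using assms by simp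
  have h1: "1 / a' = a / b + a / c" unfolding e using assms bc by (simp add: field_simps)
  have h2: "a' / b + a' / c = 1 / a" unfolding e using assms bc by (simp add: divide_simps)
  have "k / (k * a') + (u + k * a') / b + (k * a' + l) / c = 1 / a' + u / b + l / c + k * (a' / b + a' / c)"
    using assms(1-4) ap by (simp add: field_simps)
  also have "\<dots> = k / a + (u + a) / b + (a + l) / c" unfolding h1 h2
    using assms(1-4) by (simp add: field_simps)
  finally show ?thesis .
qed

lemma xb_nonneg: "pos n m X \<Longrightarrow> i \<le> n \<Longrightarrow> j \<le> m \<Longrightarrow> xb X i j \<ge> 0"
  by (auto simp: xb_def pos_def less_imp_le)

lemma step_pot:
  assumes pos: "pos n m X" and i: "i = Suc (Suc i0)" "i \<le> n" and j: "j = Suc (Suc j0)" "j \<le> m"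
    and Q: "Q (Suc i0) (Suc j0)" "Q (Suc i0) j" "Q i (Suc j0)"
  shows "PotQ n m Q (Dm (Suc i0) (Suc j0) (lmove i j X)) = PotQ n m Q (Dm i j X)"
proof -
  define a where "a = X (Suc i0) (Suc j0)"
  define b where "b = X (Suc i0) j"
  define c where "c = X i (Suc j0)"
  define d where "d = X i j"
  define k where "k = xb X i0 (Suc j0) + xb X (Suc i0) j0"
  define u where "u = xb X i0 j"
  define l where "l = xb X i j0"
  define a' where "a' = b * c / (a * b + a * c)"
  define Z1 where "Z1 = Dm (Suc i0) (Suc j0) (lmove i j X)"
  define Z2 where "Z2 = Dm i j X"
  have P: "\<And>p q. 1 \<le> p \<Longrightarrow> p \<le> n \<Longrightarrow> 1 \<le> q \<Longrightarrow> q \<le> m \<Longrightarrow> X p q > 0"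
    using pos by (auto simp: pos_def)
  have pa: "a > 0" "b > 0" "c > 0" using P i j unfolding a_def b_def c_def by auto
  have kp: "k > 0"
  proof (cases i0)
    case 0
    then show ?thesis
    proof (cases j0)
      case 0 then show ?thesis using \<open>i0 = 0\<close> by (simp add: k_def xb_def)
    next
      case (Suc j1)
      then have "X (Suc 0) j0 > 0" using P i j by auto
      then show ?thesis using \<open>i0 = 0\<close> Suc by (simp add: k_def xb_def)
    qed
  next
    case (Suc i1)
    then have "X i0 (Suc j0) > 0" using P i j by auto
    moreover have "xb X (Suc i0) j0 \<ge> 0" using xb_nonneg[OF pos] i j by auto
    ultimately show ?thesis using Suc by (simp add: k_def xb_def)
  qed
  have Y: "lmove (Suc (Suc i0)) (Suc (Suc j0)) X = mupd (mupd X (Suc i0) (Suc j0) a') (Suc (Suc i0)) (Suc (Suc j0)) (d * (b + c))"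
    using i j by (simp add: lmove_def Let_def a_def b_def c_def d_def a'_def)
  have Z2v: "Z2 p q = (if p = i \<and> q = j then (b + c) * d else X p q)" for p q
    using i j by (simp add: Z2_def Dm_def mupd_def xb_def b_def c_def d_def)
  have Z1v: "Z1 p q = (if p = Suc i0 \<and> q = Suc j0 then k * a' else Z2 p q)" for p q
  proof -
    have "xb (lmove i j X) i0 (Suc j0) = xb X i0 (Suc j0)"
      using i j by (simp add: Y xb_def mupd_def)
    moreover have "xb (lmove i j X) (Suc i0) j0 = xb X (Suc i0) j0"
      using i j by (simp add: Y xb_def mupd_def)
    ultimately show ?thesis
      unfolding Z1_def Dm_def using i j by (simp add: Z2v Y mupd_def k_def algebra_simps)
  qed
  have agree: "\<And>p q. (p, q) \<noteq> (Suc i0, Suc j0) \<Longrightarrow> Z1 p q = Z2 p q"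
    using Z1v by auto
  define G where "G = {1..n} \<times> {1..m}"
  define A where "A = {(Suc i0, Suc j0), (Suc i0, Suc (Suc j0)), (Suc (Suc i0), Suc j0)}"
  have AG: "A \<subseteq> G" using i j by (auto simp: A_def G_def)
  have "PotQ n m Q Z1 - PotQ n m Q Z2
      = (\<Sum>p\<in>A. tm Q Z1 (fst p) (snd p)) - (\<Sum>p\<in>A. tm Q Z2 (fst p) (snd p))"
    unfolding PotQ_def G_def[symmetric]
    by (rule sum_diff_on) (use AG in \<open>auto simp: G_def A_def intro!: tm_agree agree\<close>)
  also have "\<dots> = 0"
  proof -
    have t1: "tm Q Z1 (Suc i0) (Suc j0) = k / (k * a')"
      using Q i j by (simp add: tm_def Ec_def Z1v Z2v xb_def k_def)
    have t2: "tm Q Z2 (Suc i0) (Suc j0) = k / a"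
      using Q i j by (simp add: tm_def Ec_def Z2v xb_def k_def a_def)
    have t3: "tm Q Z1 (Suc i0) (Suc (Suc j0)) = (u + k * a') / b"
      using Q i j by (simp add: tm_def Ec_def Z1v Z2v xb_def u_def b_def)
    have t4: "tm Q Z2 (Suc i0) (Suc (Suc j0)) = (u + a) / b"
      using Q i j by (simp add: tm_def Ec_def Z2v xb_def u_def a_def b_def)
    have t5: "tm Q Z1 (Suc (Suc i0)) (Suc j0) = (k * a' + l) / c"
      using Q i j by (simp add: tm_def Ec_def Z1v Z2v xb_def l_def c_def)
    have t6: "tm Q Z2 (Suc (Suc i0)) (Suc j0) = (a + l) / c"
      using Q i j by (simp add: tm_def Ec_def Z2v xb_def l_def a_def c_def)
    have "(\<Sum>p\<in>A. tm Q Z1 (fst p) (snd p)) = k / (k * a') + (u + k * a') / b + (k * a' + l) / c"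
      by (simp add: A_def t1 t3 t5)
    moreover have "(\<Sum>p\<in>A. tm Q Z2 (fst p) (snd p)) = k / a + (u + a) / b + (a + l) / c"
      by (simp add: A_def t2 t4 t6)
    ultimately show ?thesis using key_alg[OF pa kp a'_def, of u l] by simp
  qed
  finally show ?thesis unfolding Z1_def Z2_def by simp
qed

lemma Ch_base: "1 \<le> i \<Longrightarrow> 1 \<le> j \<Longrightarrow> (i = 1 \<or> j = 1) \<Longrightarrow> Ch i j X = lmove i j X"
  by (cases i; cases j) auto

lemma chain_pot:
  assumes "pos n m X" "1 \<le> i" "i \<le> n" "1 \<le> j" "j \<le> m"
    "\<And>i' j'. i' < i \<or> (i' = i \<and> j' < j) \<Longrightarrow> Q i' j'"
  shows "PotQ n m Q (Ch i j X) = PotQ n m Q (Dm i j X)"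
  using assms
proof (induction i arbitrary: j X)
  case 0 then show ?case by simp
next
  case (Suc i)
  show ?case
  proof (cases "Suc i = 1 \<or> j = 1")
    case True
    then show ?thesis using Suc.prems by (simp add: Ch_base lmove_Dm)
  next
    case False
    then obtain i0 j0 where ij: "i = Suc i0" "j = Suc (Suc j0)" using Suc.prems
      by (metis One_nat_def Suc_le_D not0_implies_Suc)
    have Ch: "Ch (Suc i) j X = Ch (Suc i0) (Suc j0) (lmove (Suc i) j X)"
      using ij by simp
    have posY: "pos n m (lmove (Suc i) j X)" using Suc.prems by (intro pos_lmove) auto
    have "PotQ n m Q (Ch i (Suc j0) (lmove (Suc i) j X))
        = PotQ n m Q (Dm i (Suc j0) (lmove (Suc i) j X))"
      by (rule Suc.IH) (use posY Suc.prems ij in auto)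
    then have "PotQ n m Q (Ch (Suc i0) (Suc j0) (lmove (Suc i) j X))
        = PotQ n m Q (Dm (Suc i0) (Suc j0) (lmove (Suc i) j X))" using ij by simp
    also have "\<dots> = PotQ n m Q (Dm (Suc i) j X)"
      using step_pot[where n=n and m=m and X=X and i="Suc i" and i0=i0 and j=j and j0=j0 and Q=Q]
        Suc.prems ij by auto
    finally show ?thesis using Ch by simp
  qed
qed

definition Qs :: "nat \<Rightarrow> nat \<Rightarrow> nat \<Rightarrow> nat \<Rightarrow> bool" where
  "Qs k j = (\<lambda>i' j'. i' < k \<or> (i' = k \<and> j' \<le> j))"

lemma row_pot:
  assumes pos: "pos n m X" and k: "1 \<le> k" "k \<le> n" and j: "Suc j \<le> m"
  shows "PotQ n m (Qs k (Suc j)) (Ch k (Suc j) X) = PotQ n m (Qs k j) X"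
proof -
  have "PotQ n m (Qs k (Suc j)) (Ch k (Suc j) X) = PotQ n m (Qs k (Suc j)) (Dm k (Suc j) X)"
    using assms by (intro chain_pot) (auto simp: Qs_def)
  also have "\<dots> = PotQ n m (Qs k j) X"
    unfolding PotQ_def
  proof (rule sum.cong[OF refl])
    fix x assume x: "x \<in> {1..n} \<times> {1..m}"
    obtain p q where pq: "x = (p, q)" by (cases x)
    have P: "\<And>a b. 1 \<le> a \<Longrightarrow> a \<le> n \<Longrightarrow> 1 \<le> b \<Longrightarrow> b \<le> m \<Longrightarrow> X a b > 0"
      using pos by (auto simp: pos_def)
    define kap where "kap = xb X (k - 1) (Suc j) + xb X k j"
    have Dv: "Dm k (Suc j) X a b = (if a = k \<and> b = Suc j then kap * X k (Suc j) else X a b)" for a b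
      by (simp add: Dm_def mupd_def kap_def)
    have agree: "\<And>a b. (a, b) \<noteq> (k, Suc j) \<Longrightarrow> Dm k (Suc j) X a b = X a b" using Dv by auto
    show "tm (Qs k (Suc j)) (Dm k (Suc j) X) (fst x) (snd x) = tm (Qs k j) X (fst x) (snd x)"
    proof (cases "(p, q) = (k, Suc j)")
      case True
      have kp: "kap > 0"
      proof (cases "k = 1")
        case True
        show ?thesis
        proof (cases j)
          case 0 then show ?thesis using True by (simp add: kap_def xb_def)
        next
          case (Suc j1)
          then have "X 1 j > 0" using P j k by auto
          then show ?thesis using True Suc by (simp add: kap_def xb_def)
        qed
      next
        case False
        then have "X (k - 1) (Suc j) > 0" using P j k by auto
        moreover have "xb X k j \<ge> 0" using xb_nonneg[OF pos] k j by auto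
        ultimately show ?thesis using False k by (simp add: kap_def xb_def)
      qed
      have xp: "X k (Suc j) > 0" using P k j by auto
      have kk: "k - 1 \<noteq> k" using k by arith
      have e1: "xb (Dm k (Suc j) X) (k - 1) (Suc j) = xb X (k - 1) (Suc j)" using kk by (simp add: xb_def Dv)
      have e2: "xb (Dm k (Suc j) X) k j = xb X k j" by (simp add: xb_def Dv)
      have e3: "Dm k (Suc j) X k (Suc j) = kap * X k (Suc j)" by (simp add: Dv)
      have "Ec (Dm k (Suc j) X) k (Suc j) = kap / (kap * X k (Suc j))"
        unfolding Ec_def diff_Suc_1 e1 e2 e3 kap_def ..
      also have "\<dots> = 1 / X k (Suc j)" using kp xp by simp
      finally show ?thesis using True pq by (simp add: tm_def Qs_def)
    next
      case nd: False
      show ?thesis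
      proof (cases "(p, q) = (k, Suc (Suc j)) \<or> (p, q) = (Suc k, Suc j)")
        case True
        then show ?thesis using pq by (auto simp: tm_def Qs_def Dv)
      next
        case F2: False
        have "tm (Qs k (Suc j)) (Dm k (Suc j) X) p q = tm (Qs k (Suc j)) X p q"
          by (rule tm_agree[where r=k and s="Suc j"]) (use agree nd F2 in auto)
        also have "\<dots> = tm (Qs k j) X p q"
          using nd by (auto simp: tm_def Qs_def)
        finally show ?thesis using pq by simp
      qed
    qed
  qed
  finally show ?thesis .
qed

lemma CR_pot:
  assumes "pos n m X" "1 \<le> k" "k \<le> n" "c \<le> m"
  shows "PotQ n m (Qs k c) (CR k c X) = PotQ n m (Qs k 0) X \<and> pos n m (CR k c X)"
  using assms
proof (induction c)
  case 0 then show ?case by simp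
next
  case (Suc c)
  then have IH: "PotQ n m (Qs k c) (CR k c X) = PotQ n m (Qs k 0) X" "pos n m (CR k c X)" by auto
  have "PotQ n m (Qs k (Suc c)) (CR k (Suc c) X) = PotQ n m (Qs k c) (CR k c X)"
    using row_pot[OF IH(2)] Suc.prems by simp
  moreover have "pos n m (CR k (Suc c) X)" using pos_Ch[OF IH(2)] Suc.prems by simp
  ultimately show ?case using IH by simp
qed

lemma PotQ_cong: "(\<And>i j. 1 \<le> i \<Longrightarrow> i \<le> n \<Longrightarrow> 1 \<le> j \<Longrightarrow> j \<le> m \<Longrightarrow> Q1 i j = Q2 i j)
   \<Longrightarrow> PotQ n m Q1 X = PotQ n m Q2 X"
  unfolding PotQ_def tm_def by (intro sum.cong) auto

lemma R_pot:
  assumes "pos n m X" "1 \<le> k" "k \<le> n"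
  shows "PotQ n m (Qs (Suc k) 0) (rsk_R m k X) = PotQ n m (Qs k 0) X \<and> pos n m (rsk_R m k X)"
proof -
  have "rsk_R m k = CR k m" by (simp add: rsk_R_Fr Fr_CR)
  moreover have "PotQ n m (Qs (Suc k) 0) Y = PotQ n m (Qs k m) Y" for Y
    by (intro PotQ_cong) (auto simp: Qs_def)
  ultimately show ?thesis using CR_pot[OF assms, of m] by simp
qed

lemma T_pot:
  assumes "pos n m W" "k \<le> n"
  shows "PotQ n m (Qs (Suc k) 0) (fold (rsk_R m) [1..<k + 1] W) = PotQ n m (Qs 1 0) W
     \<and> pos n m (fold (rsk_R m) [1..<k + 1] W)"
  using assms
proof (induction k)
  case 0 then show ?case by simp
next
  case (Suc k)
  then have IH: "PotQ n m (Qs (Suc k) 0) (fold (rsk_R m) [1..<k + 1] W) = PotQ n m (Qs 1 0) W"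
     "pos n m (fold (rsk_R m) [1..<k + 1] W)" by auto
  have "fold (rsk_R m) [1..<Suc k + 1] W = rsk_R m (Suc k) (fold (rsk_R m) [1..<k + 1] W)"
    by simp
  then show ?case using R_pot[OF IH(2), of "Suc k"] Suc.prems IH(1) by simp
qed

lemma energy_total:
  assumes "pos n m W"
  shows "(\<Sum>p\<in>{1..n}\<times>{1..m}. Ec (rsk_T n m W) (fst p) (snd p))
       = (\<Sum>p\<in>{1..n}\<times>{1..m}. 1 / W (fst p) (snd p))"
     and "pos n m (rsk_T n m W)"
proof -
  have T: "PotQ n m (Qs (Suc n) 0) (rsk_T n m W) = PotQ n m (Qs 1 0) W \<and> pos n m (rsk_T n m W)"
    using T_pot[OF assms, of n] by (simp add: rsk_T_def)
  have "PotQ n m (Qs (Suc n) 0) Y = (\<Sum>p\<in>{1..n}\<times>{1..m}. Ec Y (fst p) (snd p))" for Y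
    unfolding PotQ_def tm_def Qs_def by (intro sum.cong) auto
  moreover have "PotQ n m (Qs 1 0) Y = (\<Sum>p\<in>{1..n}\<times>{1..m}. 1 / Y (fst p) (snd p))" for Y
    unfolding PotQ_def tm_def Qs_def by (intro sum.cong) auto
  ultimately show "(\<Sum>p\<in>{1..n}\<times>{1..m}. Ec (rsk_T n m W) (fst p) (snd p))
       = (\<Sum>p\<in>{1..n}\<times>{1..m}. 1 / W (fst p) (snd p))" "pos n m (rsk_T n m W)"
    using T by auto
qed

definition scl :: "(nat \<Rightarrow> nat \<Rightarrow> real) \<Rightarrow> mat \<Rightarrow> mat" where
  "scl f X = (\<lambda>p q. 2 powr f p q * X p q)"

definition fm :: "nat \<Rightarrow> nat \<Rightarrow> (nat \<Rightarrow> nat \<Rightarrow> real) \<Rightarrow> (nat \<Rightarrow> nat \<Rightarrow> real)" where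
  "fm i j f = (if i = 1 \<and> j = 1 then f
     else if j = 1 then mupd f i 1 (f (i - 1) 1 + f i 1)
     else if i = 1 then mupd f 1 j (f 1 (j - 1) + f 1 j)
     else mupd (mupd f (i - 1) (j - 1) (f i (j - 1) - f (i - 1) (j - 1))) i j (f i j + f (i - 1) j))"

lemma aux_div:
  fixes P A a b c :: real assumes "P > 0" "A > 0"
  shows "(P * b) * (P * c) / ((A * a) * (P * b) + (A * a) * (P * c)) = (P / A) * (b * c / (a * b + a * c))"
proof -
  have "(A * a) * (P * b) + (A * a) * (P * c) = (A * P) * (a * b + a * c)" by (simp add: algebra_simps)
  moreover have "(P * b) * (P * c) = (A * P) * ((P / A) * (b * c))" using assms by (simp add: field_simps)
  ultimately show ?thesis using assms by (simp add: mult_divide_mult_cancel_left_if)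
qed

lemma lmove_scl:
  assumes i: "1 \<le> i" and j: "1 \<le> j" and C: "2 \<le> i \<Longrightarrow> 2 \<le> j \<Longrightarrow> f (i - 1) j = f i (j - 1)"
  shows "lmove i j (scl f X) = scl (fm i j f) (lmove i j X)"
proof (cases "i = 1 \<and> j = 1")
  case True then show ?thesis by (simp add: lmove_def fm_def)
next
  case F1: False
  show ?thesis
  proof (cases "j = 1")
    case True
    then show ?thesis using F1 by (auto simp: lmove_def fm_def scl_def mupd_def powr_add fun_eq_iff)
  next
    case F2: False
    show ?thesis
    proof (cases "i = 1")
      case True
      then show ?thesis using F1 F2 by (auto simp: lmove_def fm_def scl_def mupd_def powr_add fun_eq_iff)
    next
      case F3: False
      have ij: "2 \<le> i" "2 \<le> j" using i j F2 F3 by auto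
      have Ce: "f (i - 1) j = f i (j - 1)" "f (i - Suc 0) j = f i (j - Suc 0)" using C ij by simp_all
      define P where "P = 2 powr f i (j - 1)"
      define A where "A = 2 powr f (i - 1) (j - 1)"
      have PA: "P > 0" "A > 0" unfolding P_def A_def by auto
      have ne: "(i - 1, j - 1) \<noteq> (i, j)" using ij by auto
      have L: "lmove i j Z = mupd (mupd Z (i - 1) (j - 1)
          (Z (i - 1) j * Z i (j - 1) / (Z (i - 1) (j - 1) * Z (i - 1) j + Z (i - 1) (j - 1) * Z i (j - 1))))
          i j (Z i j * (Z (i - 1) j + Z i (j - 1)))" for Z
        using F2 F3 by (simp add: lmove_def Let_def)
      have Fm: "fm i j f = mupd (mupd f (i - 1) (j - 1) (f i (j - 1) - f (i - 1) (j - 1))) i j (f i j + f (i - 1) j)"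
        using F2 F3 by (simp add: fm_def)
      show ?thesis
      proof (intro ext)
        fix p q
        consider "p = i - 1 \<and> q = j - 1" | "p = i \<and> q = j" | "\<not> (p = i - 1 \<and> q = j - 1) \<and> \<not> (p = i \<and> q = j)"
          by blast
        then show "lmove i j (scl f X) p q = scl (fm i j f) (lmove i j X) p q"
        proof cases
          case 1
          then have "p \<noteq> i" using ij by auto
          then have "lmove i j (scl f X) p q = (P * X (i - 1) j) * (P * X i (j - 1)) /
             ((A * X (i - 1) (j - 1)) * (P * X (i - 1) j) + (A * X (i - 1) (j - 1)) * (P * X i (j - 1)))"
            using 1 by (simp add: L mupd_def scl_def P_def A_def Ce)
          also have "\<dots> = (P / A) * (X (i - 1) j * X i (j - 1) / (X (i - 1) (j - 1) * X (i - 1) j + X (i - 1) (j - 1) * X i (j - 1)))"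
            by (rule aux_div[OF PA])
          also have "\<dots> = scl (fm i j f) (lmove i j X) p q"
            using 1 \<open>p \<noteq> i\<close> by (simp add: L Fm mupd_def scl_def P_def A_def powr_diff)
          finally show ?thesis .
        next
          case 2
          then show ?thesis using ij by (simp add: L Fm mupd_def scl_def powr_add Ce algebra_simps)
        next
          case 3
          then show ?thesis by (auto simp: L Fm mupd_def scl_def)
        qed
      qed
    qed
  qed
qed

definition rowF :: "nat \<Rightarrow> nat \<Rightarrow> (nat \<Rightarrow> nat \<Rightarrow> real) \<Rightarrow> (nat \<Rightarrow> nat \<Rightarrow> real)" where
  "rowF i J f = (\<lambda>p q. if p = i \<and> 1 \<le> q \<and> q \<le> J then f i q + f (i - 1) q
      else if p = i - 1 \<and> 1 \<le> q \<and> q < J then f i q else f p q)"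

definition row1F :: "nat \<Rightarrow> (nat \<Rightarrow> nat \<Rightarrow> real) \<Rightarrow> (nat \<Rightarrow> nat \<Rightarrow> real)" where
  "row1F J f = (\<lambda>p q. if p = 1 \<and> 1 \<le> q \<and> q \<le> J then (\<Sum>t=1..q. f 1 t) else f p q)"

lemma pi_scl:
  assumes i: "2 \<le> i" and C: "\<And>q. 2 \<le> q \<Longrightarrow> q \<le> J \<Longrightarrow> f (i - 1) q = f i (q - 1) + f (i - 1) (q - 1)"
  shows "rsk_pi i J (scl f X) = scl (rowF i J f) (rsk_pi i J X)"
  using C
proof (induction J)
  case 0
  have "rowF i 0 f = f" by (auto simp: rowF_def fun_eq_iff)
  then show ?case by simp
next
  case (Suc J)
  have IH: "rsk_pi i J (scl f X) = scl (rowF i J f) (rsk_pi i J X)"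
    using Suc.IH Suc.prems by auto
  have cond: "rowF i J f (i - 1) (Suc J) = rowF i J f i (Suc J - 1)" if "2 \<le> Suc J"
  proof -
    have "rowF i J f (i - 1) (Suc J) = f (i - 1) (Suc J)" using i by (simp add: rowF_def)
    also have "\<dots> = f i J + f (i - 1) J" using Suc.prems[of "Suc J"] that by simp
    also have "\<dots> = rowF i J f i (Suc J - 1)" using that by (simp add: rowF_def)
    finally show ?thesis .
  qed
  have "rsk_pi i (Suc J) (scl f X) = lmove i (Suc J) (scl (rowF i J f) (rsk_pi i J X))"
    by (simp add: IH)
  also have "\<dots> = scl (fm i (Suc J) (rowF i J f)) (lmove i (Suc J) (rsk_pi i J X))"
    using i cond by (intro lmove_scl) auto
  also have "fm i (Suc J) (rowF i J f) = rowF i (Suc J) f"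
  proof (cases J)
    case 0
    then show ?thesis using i by (auto simp: fm_def rowF_def mupd_def fun_eq_iff)
  next
    case (Suc J')
    then show ?thesis using i by (auto simp: fm_def rowF_def mupd_def fun_eq_iff)
  qed
  finally show ?case by simp
qed

lemma pi1_scl: "rsk_pi 1 J (scl f X) = scl (row1F J f) (rsk_pi 1 J X)"
proof (induction J)
  case 0
  have "row1F 0 f = f" by (auto simp: row1F_def fun_eq_iff)
  then show ?case by simp
next
  case (Suc J)
  have "rsk_pi 1 (Suc J) (scl f X) = lmove 1 (Suc J) (scl (row1F J f) (rsk_pi 1 J X))"
    using Suc.IH by simp
  also have "\<dots> = scl (fm 1 (Suc J) (row1F J f)) (lmove 1 (Suc J) (rsk_pi 1 J X))"
    by (intro lmove_scl) auto
  also have "fm 1 (Suc J) (row1F J f) = row1F (Suc J) f"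
  proof (cases J)
    case 0
    then show ?thesis by (auto simp: fm_def row1F_def mupd_def fun_eq_iff)
  next
    case (Suc J')
    then show ?thesis by (auto simp: fm_def row1F_def mupd_def fun_eq_iff add.commute)
  qed
  finally show ?case by simp
qed

definition Hs :: "nat \<Rightarrow> nat \<Rightarrow> nat \<Rightarrow> nat \<Rightarrow> (nat \<Rightarrow> nat \<Rightarrow> real)" where
  "Hs n m c k = (\<lambda>p q. if 1 \<le> p \<and> p \<le> n \<and> 1 \<le> q \<and> q \<le> m then
      (if p \<le> k then (if c \<le> q + k then 1 else 0) else (if p + q = c then 1 else 0)) else 0)"

definition Sb :: "nat \<Rightarrow> nat \<Rightarrow> nat \<Rightarrow> nat \<Rightarrow> nat \<Rightarrow> (nat \<Rightarrow> nat \<Rightarrow> real)" where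
  "Sb n m c k i = (\<lambda>p q. if 1 \<le> p \<and> p \<le> n \<and> 1 \<le> q \<and> q \<le> m then
      (if k < p then (if p + q = c then 1 else 0)
       else if i < p then (if c \<le> q + k then 1 else 0)
       else if p = i then (if q + k \<le> m + i then (if k + q = c then 1 else 0) else 1)
       else (if c + 1 \<le> q + k then 1 else 0)) else 0)"

lemma rowF_Sb:
  assumes "2 \<le> i" "i \<le> k" "k \<le> n" "c \<le> m + 1"
  shows "rowF i (m + i - k) (Sb n m c k i) = Sb n m c k (i - 1)"
  using assms by (auto simp: rowF_def Sb_def fun_eq_iff)

lemma C_Sb:
  assumes "2 \<le> i" "i \<le> k" "k \<le> n" "c \<le> m + 1" "2 \<le> q" "q \<le> m + i - k"
  shows "Sb n m c k i (i - 1) q = Sb n m c k i i (q - 1) + Sb n m c k i (i - 1) (q - 1)"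
  using assms by (auto simp: Sb_def)

lemma sum_ind:
  fixes q k c :: nat
  assumes "k + 1 \<le> c"
  shows "(\<Sum>t=1..q. (if k + t = c then 1 else 0 :: real)) = (if c \<le> q + k then 1 else 0)"
proof (induction q)
  case 0 then show ?case using assms by simp
next
  case (Suc q)
  then show ?case using assms by auto
qed

lemma Sb0_Hs: "Sb n m c k 0 = Hs n m c k"
  by (auto simp: Sb_def Hs_def fun_eq_iff)

lemma Sbkk_Hs: "1 \<le> k \<Longrightarrow> Sb n m c k k = Hs n m c (k - 1)"
  by (auto simp: Sb_def Hs_def fun_eq_iff)

lemma row1F_Sb:
  assumes "1 \<le> k" "k \<le> n" "c = min n m + 1"
  shows "row1F (m + 1 - k) (Sb n m c k 1) = Sb n m c k 0"
proof (intro ext)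
  fix p q
  show "row1F (m + 1 - k) (Sb n m c k 1) p q = Sb n m c k 0 p q"
  proof (cases "p = 1 \<and> 1 \<le> q \<and> q \<le> m + 1 - k")
    case True
    then have km: "k \<le> m" "k + 1 \<le> c" "q \<le> m" using assms by auto
    have "(\<Sum>t=1..q. Sb n m c k 1 1 t) = (\<Sum>t=1..q. (if k + t = c then 1 else 0 :: real))"
      using True assms by (intro sum.cong) (auto simp: Sb_def)
    also have "\<dots> = (if c \<le> q + k then 1 else 0)" by (rule sum_ind[OF km(2)])
    moreover have "row1F (m + 1 - k) (Sb n m c k 1) p q = (\<Sum>t=1..q. Sb n m c k 1 1 t)"
      using True by (simp add: row1F_def)
    moreover have "Sb n m c k 0 p q = (if c \<le> q + k then 1 else 0)"
      using True assms km by (simp add: Sb_def)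
    ultimately show ?thesis by simp
  next
    case False
    then show ?thesis using assms by (auto simp: row1F_def Sb_def)
  qed
qed

lemma Fr_scl:
  assumes "i \<le> k" "1 \<le> k" "k \<le> n" "c = min n m + 1"
  shows "Fr i (m + i - k) (scl (Sb n m c k i) X) = scl (Hs n m c k) (Fr i (m + i - k) X)"
  using assms
proof (induction i arbitrary: X)
  case 0 then show ?case by (simp add: Sb0_Hs)
next
  case (Suc i)
  have FrS: "Fr (Suc i) (m + Suc i - k) Y = Fr i (m + i - k) (rsk_pi (Suc i) (m + Suc i - k) Y)" for Y
    by simp
  show ?case
  proof (cases i)
    case 0
    have "rsk_pi 1 (m + 1 - k) (scl (Sb n m c k 1) X) = scl (Sb n m c k 0) (rsk_pi 1 (m + 1 - k) X)"
      using pi1_scl[of "m + 1 - k" "Sb n m c k 1" X] row1F_Sb[OF Suc.prems(2-4)] by simp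
    then show ?thesis using 0 by (simp add: Sb0_Hs)
  next
    case (Suc i')
    have pi: "rsk_pi (Suc i) (m + Suc i - k) (scl (Sb n m c k (Suc i)) X)
        = scl (Sb n m c k i) (rsk_pi (Suc i) (m + Suc i - k) X)"
    proof -
      have "rsk_pi (Suc i) (m + Suc i - k) (scl (Sb n m c k (Suc i)) X)
          = scl (rowF (Suc i) (m + Suc i - k) (Sb n m c k (Suc i))) (rsk_pi (Suc i) (m + Suc i - k) X)"
        using Suc Suc.prems by (intro pi_scl C_Sb) auto
      also have "rowF (Suc i) (m + Suc i - k) (Sb n m c k (Suc i)) = Sb n m c k i"
        using rowF_Sb[of "Suc i" k n c m] Suc Suc.prems by simp
      finally show ?thesis .
    qed
    show ?thesis
      unfolding FrS pi using Suc.IH[of "rsk_pi (Suc i) (m + Suc i - k) X"] Suc.prems by simp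
  qed
qed

lemma R_scl:
  assumes "1 \<le> k" "k \<le> n" "c = min n m + 1"
  shows "rsk_R m k (scl (Hs n m c (k - 1)) X) = scl (Hs n m c k) (rsk_R m k X)"
  using Fr_scl[of k k n c m X] assms by (simp add: rsk_R_Fr Sbkk_Hs)

lemma T_scl:
  assumes "k \<le> n" "c = min n m + 1"
  shows "fold (rsk_R m) [1..<k + 1] (scl (Hs n m c 0) W) = scl (Hs n m c k) (fold (rsk_R m) [1..<k + 1] W)"
  using assms
proof (induction k)
  case 0 then show ?case by simp
next
  case (Suc k)
  have "fold (rsk_R m) [1..<Suc k + 1] (scl (Hs n m c 0) W)
      = rsk_R m (Suc k) (scl (Hs n m c k) (fold (rsk_R m) [1..<k + 1] W))"
    using Suc by simp
  also have "\<dots> = scl (Hs n m c (Suc k)) (rsk_R m (Suc k) (fold (rsk_R m) [1..<k + 1] W))"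
    using R_scl[of "Suc k" n c m] Suc.prems by simp
  finally show ?case by simp
qed

lemma sum_grid: "(\<Sum>i\<in>{1..n}. \<Sum>j\<in>{1..m}. f i j) = (\<Sum>p\<in>{1..n}\<times>{1..m}. f (fst p) (snd p))"
  by (simp add: sum.cartesian_product case_prod_beta)

lemma main_real:
  fixes n m :: nat and W :: mat
  assumes n: "n \<ge> 1" and m: "m \<ge> 1" and pos: "pos n m W"
  defines "p \<equiv> min n m"
  defines "Y \<equiv> rsk_T n m W"
  defines "x \<equiv> (\<lambda>i j. if i = 0 \<or> j = 0 then 0 else Y i j)"
  shows "1 / Y 1 1 = (\<Sum>i\<in>{1..p}. 1 / W i (p + 1 - i))"
    and "(\<Sum>i\<in>{1..n}. \<Sum>j\<in>{1..m}. (x (i - 1) j + x i (j - 1)) / Y i j)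
         = (\<Sum>(i, j)\<in>{(i, j). 1 \<le> i \<and> i \<le> n \<and> 1 \<le> j \<and> j \<le> m \<and> i + j \<noteq> p + 1}. 1 / W i j)"
proof -
  define c where "c = p + 1"
  define G where "G = {1..n} \<times> {1..m}"
  have finG: "finite G" by (simp add: G_def)
  define W2 where "W2 = scl (Hs n m c 0) W"
  have posW2: "pos n m W2" using pos by (auto simp: pos_def W2_def scl_def)
  have Y2: "rsk_T n m W2 = scl (Hs n m c n) Y"
    using T_scl[of n n c m W] by (simp add: W2_def Y_def rsk_T_def c_def p_def)
  have posY: "pos n m Y" using energy_total(2)[OF pos] by (simp add: Y_def)
  have PY: "\<And>a b. 1 \<le> a \<Longrightarrow> a \<le> n \<Longrightarrow> 1 \<le> b \<Longrightarrow> b \<le> m \<Longrightarrow> Y a b > 0"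
    using posY by (auto simp: pos_def)
  have PW: "\<And>a b. 1 \<le> a \<Longrightarrow> a \<le> n \<Longrightarrow> 1 \<le> b \<Longrightarrow> b \<le> m \<Longrightarrow> W a b > 0"
    using pos by (auto simp: pos_def)
  have Y2v: "rsk_T n m W2 a b = 2 * Y a b" if "1 \<le> a" "a \<le> n" "1 \<le> b" "b \<le> m" for a b
  proof -
    have h: "Suc (min n m) \<le> b + n" using that by (simp add: min_def)
    show ?thesis using that h by (simp add: Y2 scl_def Hs_def c_def p_def)
  qed
  have E1: "(\<Sum>q\<in>G. Ec Y (fst q) (snd q)) = (\<Sum>q\<in>G. 1 / W (fst q) (snd q))"
    using energy_total(1)[OF pos] by (simp add: Y_def G_def)
  have E2: "(\<Sum>q\<in>G. Ec (rsk_T n m W2) (fst q) (snd q)) = (\<Sum>q\<in>G. 1 / W2 (fst q) (snd q))"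
    using energy_total(1)[OF posW2] by (simp add: G_def)
  have one: "(1::nat, 1::nat) \<in> G" using n m by (simp add: G_def)
  have dE: "(\<Sum>q\<in>G. Ec (rsk_T n m W2) (fst q) (snd q)) - (\<Sum>q\<in>G. Ec Y (fst q) (snd q))
       = 1 / (2 * Y 1 1) - 1 / Y 1 1"
  proof -
    have "(\<Sum>q\<in>G. Ec (rsk_T n m W2) (fst q) (snd q)) - (\<Sum>q\<in>G. Ec Y (fst q) (snd q))
        = (\<Sum>q\<in>{(1,1)}. Ec (rsk_T n m W2) (fst q) (snd q)) - (\<Sum>q\<in>{(1,1)}. Ec Y (fst q) (snd q))"
    proof (rule sum_diff_on[OF finG])
      show "{(1, 1)} \<subseteq> G" using one by simp
    next
      fix q assume q: "q \<in> G - {(1, 1)}"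
      obtain a b where ab: "q = (a, b)" by (cases q)
      have g: "1 \<le> a" "a \<le> n" "1 \<le> b" "b \<le> m" "(a, b) \<noteq> (1, 1)" using q ab by (auto simp: G_def)
      have x1: "xb (rsk_T n m W2) (a - 1) b = 2 * xb Y (a - 1) b"
        using g by (auto simp: xb_def Y2v)
      have x2: "xb (rsk_T n m W2) a (b - 1) = 2 * xb Y a (b - 1)"
        using g by (auto simp: xb_def Y2v)
      show "Ec (rsk_T n m W2) (fst q) (snd q) = Ec Y (fst q) (snd q)"
        unfolding ab fst_conv snd_conv Ec_def x1 x2 Y2v[OF g(1-4)]
        using g PY[of a b] by (simp add: field_simps)
    qed
    also have "\<dots> = 1 / (2 * Y 1 1) - 1 / Y 1 1"
      using n m by (simp add: Ec_def xb_def Y2v)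
    finally show ?thesis .
  qed
  define Dg where "Dg = {q \<in> G. fst q + snd q = c}"
  have dW: "(\<Sum>q\<in>G. 1 / W2 (fst q) (snd q)) - (\<Sum>q\<in>G. 1 / W (fst q) (snd q))
       = - (1/2) * (\<Sum>q\<in>Dg. 1 / W (fst q) (snd q))"
  proof -
    have "(\<Sum>q\<in>G. 1 / W2 (fst q) (snd q)) - (\<Sum>q\<in>G. 1 / W (fst q) (snd q))
       = (\<Sum>q\<in>G. 1 / W2 (fst q) (snd q) - 1 / W (fst q) (snd q))"
      by (simp add: sum_subtractf)
    also have "\<dots> = (\<Sum>q\<in>G. if fst q + snd q = c then - (1/2) * (1 / W (fst q) (snd q)) else 0)"
      by (intro sum.cong) (auto simp: G_def W2_def scl_def Hs_def)
    also have "\<dots> = (\<Sum>q\<in>Dg. - (1/2) * (1 / W (fst q) (snd q)))"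
      unfolding Dg_def by (rule sum.inter_filter[symmetric, OF finG])
    also have "\<dots> = - (1/2) * (\<Sum>q\<in>Dg. 1 / W (fst q) (snd q))"
      by (simp add: sum_distrib_left)
    finally show ?thesis .
  qed
  have Y11: "Y 1 1 > 0" using PY n m by simp
  have R1: "1 / Y 1 1 = (\<Sum>q\<in>Dg. 1 / W (fst q) (snd q))"
    using dE dW E1 E2 Y11 by (simp add: field_simps)
  have Dg_img: "Dg = (\<lambda>i. (i, p + 1 - i)) ` {1..p}"
  proof
    show "Dg \<subseteq> (\<lambda>i. (i, p + 1 - i)) ` {1..p}"
    proof
      fix q assume "q \<in> Dg"
      then obtain a b where q: "q = (a, b)" "1 \<le> a" "a \<le> n" "1 \<le> b" "b \<le> m" "a + b = p + 1"
        by (cases q) (auto simp: Dg_def G_def c_def)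
      then have "a \<in> {1..p}" "b = p + 1 - a" by auto
      then show "q \<in> (\<lambda>i. (i, p + 1 - i)) ` {1..p}" using q by auto
    qed
  next
    show "(\<lambda>i. (i, p + 1 - i)) ` {1..p} \<subseteq> Dg"
      by (auto simp: Dg_def G_def c_def p_def)
  qed
  have inj: "inj_on (\<lambda>i. (i, p + 1 - i)) {1..p}" by (auto simp: inj_on_def)
  show "1 / Y 1 1 = (\<Sum>i\<in>{1..p}. 1 / W i (p + 1 - i))"
    unfolding R1 Dg_img sum.reindex[OF inj] comp_def by simp
  have Ecx: "Ec Y a b = (x (a - 1) b + x a (b - 1)) / Y a b + (if a = 1 \<and> b = 1 then 1 / Y 1 1 else 0)"
    if "1 \<le> a" "1 \<le> b" for a b
    using that by (auto simp: Ec_def xb_def x_def add_divide_distrib)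
  have S1: "(\<Sum>q\<in>G. Ec Y (fst q) (snd q))
       = (\<Sum>q\<in>G. (x (fst q - 1) (snd q) + x (fst q) (snd q - 1)) / Y (fst q) (snd q)) + 1 / Y 1 1"
  proof -
    have "(\<Sum>q\<in>G. Ec Y (fst q) (snd q))
       = (\<Sum>q\<in>G. (x (fst q - 1) (snd q) + x (fst q) (snd q - 1)) / Y (fst q) (snd q)
            + (if q = (1, 1) then 1 / Y 1 1 else 0))"
    proof (rule sum.cong[OF refl])
      fix q assume "q \<in> G"
      then obtain a b where q: "q = (a, b)" "1 \<le> a" "1 \<le> b" by (cases q) (auto simp: G_def)
      show "Ec Y (fst q) (snd q) = (x (fst q - 1) (snd q) + x (fst q) (snd q - 1)) / Y (fst q) (snd q)
            + (if q = (1, 1) then 1 / Y 1 1 else 0)"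
        unfolding q fst_conv snd_conv Ecx[OF q(2,3)] by simp
    qed
    also have "\<dots> = (\<Sum>q\<in>G. (x (fst q - 1) (snd q) + x (fst q) (snd q - 1)) / Y (fst q) (snd q)) + 1 / Y 1 1"
      using finG one by (simp add: sum.distrib)
    finally show ?thesis .
  qed
  define Off where "Off = {(i, j). 1 \<le> i \<and> i \<le> n \<and> 1 \<le> j \<and> j \<le> m \<and> i + j \<noteq> p + 1}"
  have Off_eq: "Off = G - Dg" by (auto simp: Off_def G_def Dg_def c_def)
  have S2: "(\<Sum>q\<in>G. 1 / W (fst q) (snd q)) = (\<Sum>q\<in>Dg. 1 / W (fst q) (snd q)) + (\<Sum>q\<in>Off. 1 / W (fst q) (snd q))"
  proof -
    have "Dg \<subseteq> G" by (auto simp: Dg_def)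
    then show ?thesis unfolding Off_eq using finG by (simp add: sum.subset_diff add.commute)
  qed
  have "(\<Sum>q\<in>G. (x (fst q - 1) (snd q) + x (fst q) (snd q - 1)) / Y (fst q) (snd q))
      = (\<Sum>q\<in>Off. 1 / W (fst q) (snd q))"
    using S1 S2 E1 R1 by simp
  then show "(\<Sum>i\<in>{1..n}. \<Sum>j\<in>{1..m}. (x (i - 1) j + x i (j - 1)) / Y i j)
         = (\<Sum>(i, j)\<in>{(i, j). 1 \<le> i \<and> i \<le> n \<and> 1 \<le> j \<and> j \<le> m \<and> i + j \<noteq> p + 1}. 1 / W i j)"
    unfolding sum_grid G_def[symmetric] Off_def[symmetric] by (simp add: case_prod_beta)
qed

theorem theorem3p2:
  fixes n m :: nat and W :: mat and s :: complex
  assumes "n \<ge> 1" and "m \<ge> 1"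
    and "\<And>i j. 1 \<le> i \<Longrightarrow> i \<le> n \<Longrightarrow> 1 \<le> j \<Longrightarrow> j \<le> m \<Longrightarrow> W i j > 0"
  shows "(let p = min n m in
            (\<Sum>i\<in>{1..p}. s / complex_of_real (W i (p + 1 - i)))
          + (\<Sum>(i, j)\<in>{(i, j). 1 \<le> i \<and> i \<le> n \<and> 1 \<le> j \<and> j \<le> m \<and> i + j \<noteq> p + 1}.
               1 / complex_of_real (W i j)))
         = energy n m s (rsk_T n m W)"
proof -
  have pos: "pos n m W" using assms(3) by (auto simp: pos_def)
  define p where "p = min n m"
  define Y where "Y = rsk_T n m W"
  define x where "x = (\<lambda>i j. if i = 0 \<or> j = 0 then 0 else Y i j)"
  define Off where "Off = {(i, j). 1 \<le> i \<and> i \<le> n \<and> 1 \<le> j \<and> j \<le> m \<and> i + j \<noteq> p + 1}"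
  have R1: "1 / Y 1 1 = (\<Sum>i\<in>{1..p}. 1 / W i (p + 1 - i))"
    using main_real(1)[OF assms(1,2) pos] by (simp add: p_def Y_def)
  have R2: "(\<Sum>i\<in>{1..n}. \<Sum>j\<in>{1..m}. (x (i - 1) j + x i (j - 1)) / Y i j)
         = (\<Sum>(i, j)\<in>Off. 1 / W i j)"
    unfolding x_def Y_def Off_def p_def by (rule main_real(2)[OF assms(1,2) pos])
  have E: "energy n m s Y = s / complex_of_real (Y 1 1)
      + (\<Sum>i\<in>{1..n}. \<Sum>j\<in>{1..m}. complex_of_real ((x (i - 1) j + x i (j - 1)) / Y i j))"
    by (simp add: energy_def x_def Let_def)
  have A: "s / complex_of_real (Y 1 1) = (\<Sum>i\<in>{1..p}. s / complex_of_real (W i (p + 1 - i)))"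
  proof -
    have "s / complex_of_real (Y 1 1) = s * complex_of_real (1 / Y 1 1)"
      by (simp add: divide_inverse of_real_inverse)
    also have "\<dots> = s * (\<Sum>i\<in>{1..p}. complex_of_real (1 / W i (p + 1 - i)))"
      unfolding R1 of_real_sum ..
    also have "\<dots> = (\<Sum>i\<in>{1..p}. s / complex_of_real (W i (p + 1 - i)))"
      by (simp add: sum_distrib_left divide_inverse of_real_inverse)
    finally show ?thesis .
  qed
  have B: "(\<Sum>i\<in>{1..n}. \<Sum>j\<in>{1..m}. complex_of_real ((x (i - 1) j + x i (j - 1)) / Y i j))
      = (\<Sum>(i, j)\<in>Off. 1 / complex_of_real (W i j))"
  proof -
    have "(\<Sum>i\<in>{1..n}. \<Sum>j\<in>{1..m}. complex_of_real ((x (i - 1) j + x i (j - 1)) / Y i j))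
        = complex_of_real (\<Sum>i\<in>{1..n}. \<Sum>j\<in>{1..m}. (x (i - 1) j + x i (j - 1)) / Y i j)"
      by (simp add: of_real_sum)
    also have "\<dots> = complex_of_real (\<Sum>(i, j)\<in>Off. 1 / W i j)" unfolding R2 ..
    also have "\<dots> = (\<Sum>q\<in>Off. complex_of_real ((\<lambda>(i, j). 1 / W i j) q))"
      by (rule of_real_sum)
    also have "\<dots> = (\<Sum>(i, j)\<in>Off. 1 / complex_of_real (W i j))"
      by (intro sum.cong) (auto simp: of_real_divide)
    finally show ?thesis .
  qed
  show ?thesis
    unfolding Let_def p_def[symmetric] Off_def[symmetric] Y_def[symmetric] E A B ..
qed

end
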